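(* Let $N\ge 2$ be an integer, $\lambda\in[0,\frac{\pi}{2})$, and let $\mathcal{M}=(M_1,M_2,M_3)$ be a measurement scenario with $M_3=\{C_0,C_1\}$, $C_0,C_1\in[0,\pi)$. Then the quantum scenario $(|B(\lambda)\rangle,\mathcal{M})$ is a paradox whenever $\lambda,C_0,C_1,M_1,M_2$ satisfy one of the following conditions: (a) $N=2$ and the parameters describe the standard GHZ paradox, namely $\lambda=0$ and $M_1=M_2=M_3=\{0,\frac{\pi}{2}\}$. (b) $N>2$, $N$ is even, and there exist integers $s,t$ with $s$ even, $t$ odd, $1\le s<N$ and $1\le t\le s-1$, such that $C_0=0$, $\delta(\lambda,C_1)\equiv \frac{\pi}{N}s$, $\beta(\lambda,C_1)\equiv-\frac{\pi}{N}t$; and $M_1=M_2=\{\frac{k\pi}{N}:k=0,\dots,N-1\}$. In particular, if moreover $t=s/2$, then $\lambda=\frac{\pi}{2}-\frac{\pi}{N}t$ and $C_1=\frac{\pi}{2}$. (c) There exist integers $s,t'$ with $s$ even, $1\le s<N$ and $0\le t'\le s/2-1$, such that $C_1=\pi-C_0$, $\delta(\lambda,C_0)\equiv\delta(\lambda,C_1)\equiv\frac{\pi}{N}s$, $\beta(\lambda,C_0)\equiv-\frac{\pi}{N}(t'+\frac12)$, $\beta(\lambda,C_1)\equiv-\frac{\pi}{N}(s-t'-\frac12)$; and $M_1=\{\frac{k\pi}{N}:k=0,\dots,N-1\}$, $M_2=\{\frac{(k+\frac12)\pi}{N}:k=0,\dots,N-1\}$. (d) There exist integers $s,s',t'$ with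 $s,s'$ even, $t'$ odd, $1\le s<s'<N$ and $1\le|t'|\le N-1$, such that $\delta(\lambda,C_0)\equiv\frac{\pi}{N}s$, $\delta(\lambda,C_1)\equiv\frac{\pi}{N}s'$, $\beta(\lambda,C_1)-\beta(\lambda,C_0)\equiv\frac{\pi}{N}t'$; and, letting $t$ be the real number with $0<t<s$ and $\beta(\lambda,C_0)\equiv-\frac{\pi}{N}t$ and setting $\nu:=\lceil t\rceil-t$, we have $M_1=\{\frac{k\pi}{N}:k=0,\dots,N-1\}$ and $M_2=\{\frac{(k+\nu)\pi}{N}:k=0,\dots,N-1\}$.
   Context: Throughout, $\equiv$ denotes equality modulo $2\pi$. For $\varphi\in\mathbb{R}$, the equatorial measurement on a qubit is $E_\varphi=\cos\varphi\, X+\sin\varphi\, Y$, with $+1$ eigenvector $|\varphi\rangle=\frac{1}{\sqrt2}(|0\rangle+e^{i\varphi}|1\rangle)$ and $-1$ eigenvector $|\varphi+\pi\rangle$; outcomes $+1,-1$ are relabelled $0,1$. Measurements are identified with their angles. A measurement scenario $\mathcal{M}=(M_1,M_2,M_3)$ consists of finite sets $M_i\subseteq[0,\pi)$ of measurement angles for qubit $i$; its contexts are the triples $(A,B,C)\in M_1\times M_2\times M_3$. For a three-qubit state $|\psi\rangle$, the event $(A,B,C)\to(a,b,c)$ ($a,b,c\in\{0,1\}$) is impossible if $(\langle A+a\pi|\otimes\langle B+b\pi|\otimes\langle C+c\pi|)|\psi\rangle=0$. The quantum scenario $(|\psi\rangle,\mathcal{M})$ is a paradox if for every assignment $g$ of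 an outcome in $\{0,1\}$ to each measurement of $M_1$, $M_2$, $M_3$ (treated as disjoint sets) there is a context $(A,B,C)$ such that the event $(A,B,C)\to(g(A),g(B),g(C))$ is impossible. For $\lambda\in[0,\frac{\pi}{2})$ let $|v_\lambda\rangle=\cos\frac{\lambda}{2}|0\rangle+\sin\frac{\lambda}{2}|1\rangle$, $|w_\lambda\rangle=\sin\frac{\lambda}{2}|0\rangle+\cos\frac{\lambda}{2}|1\rangle$, and define the interpolant state $|B(\lambda)\rangle=\frac{1}{\sqrt2}(|0\rangle|0\rangle|v_\lambda\rangle+|1\rangle|1\rangle|w_\lambda\rangle)$. Define (modulo $2\pi$) $\beta(\lambda,\varphi)=\varphi-2\arctan\left(\frac{\cos\frac{\lambda}{2}\sin\varphi}{\sin\frac{\lambda}{2}+\cos\frac{\lambda}{2}\cos\varphi}\right)$ and $\delta(\lambda,\varphi)=\beta(\lambda,\varphi+\pi)-\beta(\lambda,\varphi)\equiv\pi-2\arctan(\sin\varphi\tan\lambda)$. *)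

theory Defs
  imports Complex_Main
begin

definition cong2pi :: "real \<Rightarrow> real \<Rightarrow> bool" where
  "cong2pi x y \<longleftrightarrow> (\<exists>k::int. x - y = 2 * pi * of_int k)"

text \<open>Qubit computational basis: False = |0>, True = |1>. Outcomes 0,1 are rendered
  as False, True.\<close>

definition eq_ket :: "real \<Rightarrow> bool \<Rightarrow> complex" where
  "eq_ket \<phi> x = (if x then cis \<phi> else 1) / complex_of_real (sqrt 2)"

text \<open>Eigenvector of E_A for outcome a: |A + a pi>.\<close>
definition outcome_ket :: "real \<Rightarrow> bool \<Rightarrow> bool \<Rightarrow> complex" where
  "outcome_ket A a = eq_ket (A + (if a then pi else 0))"

type_synonym state3 = "bool \<Rightarrow> bool \<Rightarrow> bool \<Rightarrow> complex"

definition event_amplitude :: "state3 \<Rightarrow> real \<Rightarrow> real \<Rightarrow> real \<Rightarrow> bool \<Rightarrow> bool \<Rightarrow> bool \<Rightarrow> complex" where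
  "event_amplitude \<psi> A B C a b c =
     (\<Sum>x\<in>UNIV. \<Sum>y\<in>UNIV. \<Sum>z\<in>UNIV.
        cnj (outcome_ket A a x) * cnj (outcome_ket B b y) * cnj (outcome_ket C c z) * \<psi> x y z)"

definition impossible_event :: "state3 \<Rightarrow> real \<Rightarrow> real \<Rightarrow> real \<Rightarrow> bool \<Rightarrow> bool \<Rightarrow> bool \<Rightarrow> bool" where
  "impossible_event \<psi> A B C a b c \<longleftrightarrow> event_amplitude \<psi> A B C a b c = 0"

definition measurement_scenario :: "real set \<Rightarrow> real set \<Rightarrow> real set \<Rightarrow> bool" where
  "measurement_scenario M1 M2 M3 \<longleftrightarrow>
     finite M1 \<and> finite M2 \<and> finite M3 \<and>
     M1 \<subseteq> {0..<pi} \<and> M2 \<subseteq> {0..<pi} \<and> M3 \<subseteq> {0..<pi}"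

text \<open>Paradox: every outcome assignment (separately on M1, M2, M3, which are treated as
  disjoint) hits an impossible event in some context.\<close>
definition paradox :: "state3 \<Rightarrow> real set \<Rightarrow> real set \<Rightarrow> real set \<Rightarrow> bool" where
  "paradox \<psi> M1 M2 M3 \<longleftrightarrow>
     (\<forall>g1 g2 g3 :: real \<Rightarrow> bool. \<exists>A\<in>M1. \<exists>B\<in>M2. \<exists>C\<in>M3.
        impossible_event \<psi> A B C (g1 A) (g2 B) (g3 C))"

definition v_vec :: "real \<Rightarrow> bool \<Rightarrow> complex" where
  "v_vec lam z = (if z then complex_of_real (sin (lam/2)) else complex_of_real (cos (lam/2)))"

definition w_vec :: "real \<Rightarrow> bool \<Rightarrow> complex" where
  "w_vec lam z = (if z then complex_of_real (cos (lam/2)) else complex_of_real (sin (lam/2)))"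

definition B_state :: "real \<Rightarrow> state3" where
  "B_state lam x y z =
     (if x = y then (if x then w_vec lam z else v_vec lam z) / complex_of_real (sqrt 2) else 0)"

text \<open>When the denominator vanishes (the numerator is then nonzero for
  lambda in [0,pi/2)) the quotient is +-infinity and 2 arctan = +-pi, which is pi modulo 2 pi.\<close>
definition beta :: "real \<Rightarrow> real \<Rightarrow> real" where
  "beta lam \<phi> =
     (let d = sin (lam/2) + cos (lam/2) * cos \<phi> in
      if d = 0 then \<phi> - pi
      else \<phi> - 2 * arctan (cos (lam/2) * sin \<phi> / d))"

definition delta :: "real \<Rightarrow> real \<Rightarrow> real" where
  "delta lam \<phi> = beta lam (\<phi> + pi) - beta lam \<phi>"

definition std_angles :: "nat \<Rightarrow> real \<Rightarrow> real set" where
  "std_angles N \<nu> = {(real k + \<nu>) * pi / real N | k. k < N}"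

end

theory Submission
  imports Defs
begin


lemma cong2pi_cis: "cong2pi x y \<Longrightarrow> cis x = cis y"
proof -
  assume "cong2pi x y"
  then obtain k :: int where k: "x - y = 2 * pi * of_int k" unfolding cong2pi_def by blast
  have "cis x = cis y * cis (2 * pi * of_int k)" using k by (simp add: cis_mult algebra_simps)
  also have "\<dots> = cis y" by simp
  finally show ?thesis .
qed

lemma cis_int_pi: "cis (of_int k * pi) = (if odd k then -1 else 1)"
proof (cases "odd k")
  case True
  then obtain m where m: "k = 2 * m + 1" by (metis oddE)
  have "of_int k * pi = 2 * pi * of_int m + pi" unfolding m by (simp add: algebra_simps)
  then have "cis (of_int k * pi) = cis (2 * pi * of_int m) * cis pi"
    by (simp only: cis_mult)
  then show ?thesis using True by simp
next
  case False
  then obtain m where m: "k = 2 * m" by (metis evenE)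
  have "cis (of_int k * pi) = cis (2 * pi * of_int m)"
    unfolding m by (simp add: algebra_simps)
  then show ?thesis using False by simp
qed

lemma cos_2arctan: "cos (2 * arctan q) = (1 - q^2) / (1 + q^2)"
proof -
  have p: "sqrt (1 + q^2)^2 = 1 + q^2" by (simp add: add_pos_nonneg)
  have "cos (2 * arctan q) = (cos (arctan q))^2 - (sin (arctan q))^2" by (simp add: cos_double)
  also have "\<dots> = (1 - q^2) / (1 + q^2)" unfolding cos_arctan sin_arctan
    by (simp add: power_divide p diff_divide_distrib)
  finally show ?thesis .
qed

lemma sin_2arctan: "sin (2 * arctan q) = 2 * q / (1 + q^2)"
proof -
  have p: "sqrt (1 + q^2) * sqrt (1 + q^2) = 1 + q^2" by (simp add: add_pos_nonneg)
  have "sin (2 * arctan q) = 2 * sin (arctan q) * cos (arctan q)" by (simp add: sin_double)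
  also have "\<dots> = 2 * q / (1 + q^2)" unfolding cos_arctan sin_arctan
    by (simp add: p)
  finally show ?thesis .
qed

lemma L1:
  "cis (beta lam \<phi>) * (complex_of_real (sin (lam/2)) + complex_of_real (cos (lam/2)) * cis \<phi>)
   = cis \<phi> * (complex_of_real (sin (lam/2)) + complex_of_real (cos (lam/2)) * cis (- \<phi>))"
proof -
  define s where "s = sin (lam/2)"
  define c where "c = cos (lam/2)"
  define d where "d = s + c * cos \<phi>"
  show ?thesis
  proof (cases "d = 0")
    case True
    have b: "beta lam \<phi> = \<phi> - pi" using True unfolding beta_def Let_def s_def c_def d_def by simp
    have "cis (\<phi> - pi) = - cis \<phi>" by (simp add: cis_divide[symmetric])
    then show ?thesis unfolding b using True unfolding d_def s_def[symmetric] c_def[symmetric]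
      by (simp add: complex_eq_iff algebra_simps) (smt (verit) mult.assoc mult.commute sin_cos_squared_add3 distrib_left)
  next
    case False
    define q where "q = c * sin \<phi> / d"
    have b: "beta lam \<phi> = \<phi> - 2 * arctan q" using False unfolding beta_def Let_def s_def c_def d_def q_def by simp
    have "cis (\<phi> - 2 * arctan q) = cis \<phi> * cis (- (2 * arctan q))" by (simp add: cis_mult)
    moreover have "cis (- (2 * arctan q)) * (complex_of_real s + complex_of_real c * cis \<phi>)
       = complex_of_real s + complex_of_real c * cis (- \<phi>)"
    proof -
      have pq: "1 + q^2 > 0" by (simp add: add_pos_nonneg)
      have e: "c * sin \<phi> = q * d" using False unfolding q_def by simp
      obtain C2 S2 where C2: "C2 = (1 - q^2) / (1 + q^2)" and S2: "S2 = 2 * q / (1 + q^2)"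
        and cs: "cis (- (2 * arctan q)) = Complex C2 (- S2)"
        by (simp add: cis.ctr cos_2arctan sin_2arctan)
      have dd: "d = s + c * cos \<phi>" by (simp add: d_def)
      have z1: "complex_of_real s + complex_of_real c * cis \<phi> = Complex d (q * d)"
        using e by (simp add: complex_eq_iff dd cis.ctr)
      have z2: "complex_of_real s + complex_of_real c * cis (- \<phi>) = Complex d (- (q * d))"
        using e by (simp add: complex_eq_iff dd cis.ctr)
      have c2: "(1 + q^2) * C2 = 1 - q^2" using pq unfolding C2 by simp
      have s2: "(1 + q^2) * S2 = 2 * q" using pq unfolding S2 by simp
      have "(1 + q^2) * (C2 * d + S2 * (q * d)) = ((1 + q^2) * C2) * d + ((1 + q^2) * S2) * (q * d)"
        by (simp add: algebra_simps)
      also have "\<dots> = (1 - q^2) * d + (2 * q) * (q * d)" by (simp only: c2 s2)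
      also have "\<dots> = (1 + q^2) * d" by (simp add: algebra_simps power2_eq_square)
      finally have "(1 + q^2) * (C2 * d + S2 * (q * d)) = (1 + q^2) * d" .
      then have r1: "C2 * d + S2 * (q * d) = d" using pq by simp
      have "(1 + q^2) * (C2 * (q * d) - S2 * d) = ((1 + q^2) * C2) * (q * d) - ((1 + q^2) * S2) * d"
        by (simp add: algebra_simps)
      also have "\<dots> = (1 - q^2) * (q * d) - (2 * q) * d" by (simp only: c2 s2)
      also have "\<dots> = (1 + q^2) * (- (q * d))" by (simp add: algebra_simps power2_eq_square)
      finally have "(1 + q^2) * (C2 * (q * d) - S2 * d) = (1 + q^2) * (- (q * d))" .
      then have r2: "C2 * (q * d) - S2 * d = - (q * d)" using pq by (metis mult_left_cancel less_irrefl)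
      show ?thesis unfolding cs z1 z2 using r1 r2
        by (simp add: complex_eq_iff algebra_simps)
    qed
    ultimately show ?thesis unfolding b s_def c_def by (simp add: mult.assoc)
  qed
qed





lemma amp_zero:
  assumes h: "cis (A + B) = - cis (beta lam C)"
  shows "(\<Sum>x\<in>UNIV. \<Sum>y\<in>UNIV. \<Sum>z\<in>UNIV.
        cnj (eq_ket A x) * cnj (eq_ket B y) * cnj (eq_ket C z) * B_state lam x y z) = 0"
proof -
  define s where "s = complex_of_real (sin (lam/2))"
  define c where "c = complex_of_real (cos (lam/2))"
  define r where "r = complex_of_real (sqrt 2)"
  have L: "cis (beta lam C) * (s + c * cis C) = cis C * (s + c * cis (- C))"
    using L1[of lam C] unfolding s_def c_def .
  have E: "(c + cis (- C) * s) + cis (- A) * cis (- B) * (s + cis (- C) * c) = 0"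
  proof -
    have "cis (A + B) * cis C * ((c + cis (- C) * s) + cis (- A) * cis (- B) * (s + cis (- C) * c))
       = cis (A + B) * (s + c * cis C) + cis C * (s + c * cis (- C))"
      by (simp add: algebra_simps cis_mult)
    also have "\<dots> = 0" using h L by (simp add: algebra_simps)
    finally show ?thesis by simp
  qed
  have "(\<Sum>x\<in>UNIV. \<Sum>y\<in>UNIV. \<Sum>z\<in>UNIV.
        cnj (eq_ket A x) * cnj (eq_ket B y) * cnj (eq_ket C z) * B_state lam x y z)
     = c / (r * (r * r * r)) + cis (- C) * s / (r * (r * r * r)) +
       (cis (- A) * cis (- B) * s / (r * (r * r * r)) + cis (- A) * cis (- B) * cis (- C) * c / (r * (r * r * r)))"
    unfolding eq_ket_def B_state_def v_vec_def w_vec_def UNIV_bool s_def c_def r_def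
    by (simp add: cis_cnj)
  also have "\<dots> = ((c + cis (- C) * s) + cis (- A) * cis (- B) * (s + cis (- C) * c)) / (r * (r * r * r))"
    by (simp add: add_divide_distrib ring_distribs mult.assoc)
  finally show ?thesis using E by simp
qed

lemma imp_suff:
  assumes "cis (A + (if a then pi else 0) + (B + (if b then pi else 0))) = - cis (beta lam (C + (if c then pi else 0)))"
  shows "impossible_event (B_state lam) A B C a b c"
  unfolding impossible_event_def event_amplitude_def outcome_ket_def
  using amp_zero[OF assms] .



lemma CL:
  fixes N :: int and f h :: "int \<Rightarrow> bool" and T T' :: int
  assumes N: "N > 0" and hf: "\<forall>x. f (x + N) = (\<not> f x)" and hh: "\<forall>y. h (y + N) = (\<not> h y)"
    and od: "odd (T' - T)"
  shows "\<exists>x y. f x \<and> h y \<and> (x + y = T \<or> x + y = T')"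
proof (rule ccontr)
  assume "\<not> ?thesis"
  then have H: "\<And>x y. f x \<Longrightarrow> h y \<Longrightarrow> x + y \<noteq> T \<and> x + y \<noteq> T'" by blast
  have fm: "f (x - N) = (\<not> f x)" for x using hf[rule_format, of "x - N"] by simp
  have key: "h (U - x) = (\<not> f x)" if U: "U = T \<or> U = T'" for U x
  proof (cases "f x")
    case True then show ?thesis using H[of x "U - x"] U by auto
  next
    case False
    then have "f (x - N)" using fm by simp
    then have "\<not> h (U - (x - N))" using H[of "x - N" "U - (x - N)"] U by auto
    moreover have "h (U - (x - N)) = (\<not> h (U - x))" using hh[rule_format, of "U - x"] by (simp add: algebra_simps)
    ultimately show ?thesis using False by simp
  qed
  define d where "d = T' - T"
  have sh: "f (x + d) = f x" for x
  proof -
    have "h (T' - (x + d)) = (\<not> f (x + d))" using key[of T' "x + d"] by simp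
    moreover have "h (T - x) = (\<not> f x)" using key[of T x] by simp
    moreover have "T' - (x + d) = T - x" unfolding d_def by simp
    ultimately show ?thesis by simp
  qed
  define e where "e = \<bar>d\<bar>"
  have she: "f (x + e) = f x" for x
  proof (cases "d \<ge> 0")
    case True then show ?thesis unfolding e_def using sh by simp
  next
    case False then show ?thesis unfolding e_def using sh[of "x - d"] by simp
  qed
  have odde: "odd e" using od unfolding e_def d_def by simp
  have e0: "e \<ge> 0" unfolding e_def by simp
  have it: "f (x + int n * e) = f x" for n x
  proof (induction n arbitrary: x)
    case 0 then show ?case by simp
  next
    case (Suc n)
    have "f (x + int (Suc n) * e) = f ((x + int n * e) + e)" by (simp add: algebra_simps)
    also have "\<dots> = f x" using she Suc by simp
    finally show ?case .
  qed
  have it2: "f (x + int n * (2 * N)) = f x" for n x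
  proof (induction n arbitrary: x)
    case 0 then show ?case by simp
  next
    case (Suc n)
    have "f (x + int (Suc n) * (2 * N)) = f (((x + int n * (2 * N)) + N) + N)" by (simp add: algebra_simps)
    also have "\<dots> = f (x + int n * (2 * N))" using hf[rule_format, of "(x + int n * (2 * N)) + N"] hf[rule_format, of "x + int n * (2 * N)"] by simp
    also have "\<dots> = f x" using Suc by simp
    finally show ?case .
  qed
  obtain m where m: "e = 2 * m + 1" using odde by (metis oddE)
  have m0: "m \<ge> 0" using m e0 by simp
  have "f (0 + int (nat N) * e) = f 0" by (rule it)
  moreover have "int (nat N) * e = N + int (nat m) * (2 * N)" using N m0 m by (simp add: algebra_simps)
  ultimately have "f (N + int (nat m) * (2 * N)) = f 0" by simp
  moreover have "f (N + int (nat m) * (2 * N)) = f N" by (rule it2)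
  moreover have "f N = (\<not> f 0)" using hf[rule_format, of 0] by simp
  ultimately show False by simp
qed


lemma chosen:
  fixes N :: nat and n x :: int and nu :: real
  assumes n: "n = int N" and N: "N \<ge> 1" and g: "g = odd (x div n)"
  shows "cis ((of_int (x mod n) + nu) * pi / N + (if g then pi else 0)) = cis ((of_int x + nu) * pi / N)"
proof -
  have "real_of_int x = real_of_int (x div n * n + x mod n)" by simp
  also have "\<dots> = of_int (x div n) * real N + of_int (x mod n)"
    unfolding of_int_add of_int_mult n by simp
  finally have "real_of_int x = of_int (x div n) * real N + of_int (x mod n)" .
  then have e: "(of_int x + nu) * pi / N = (of_int (x mod n) + nu) * pi / N + of_int (x div n) * pi"
    using N by (simp add: field_simps)
  have "cis ((of_int x + nu) * pi / N) = cis ((of_int (x mod n) + nu) * pi / N) * cis (of_int (x div n) * pi)"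
    unfolding e by (simp add: cis_mult)
  also have "\<dots> = cis ((of_int (x mod n) + nu) * pi / N) * cis (if g then pi else 0)"
    unfolding cis_int_pi g by simp
  also have "\<dots> = cis ((of_int (x mod n) + nu) * pi / N + (if g then pi else 0))"
    by (simp add: cis_mult)
  finally show ?thesis by simp
qed

lemma in_std:
  fixes N :: nat and n x :: int and nu :: real
  assumes n: "n = int N" and N: "N \<ge> 1"
  shows "(of_int (x mod n) + nu) * pi / N \<in> std_angles N nu"
proof -
  have "0 \<le> x mod n" "x mod n < n" using n N by auto
  then have "nat (x mod n) < N" "real (nat (x mod n)) = of_int (x mod n)" using n by auto
  then show ?thesis unfolding std_angles_def by (metis (mono_tags, lifting) mem_Collect_eq)
qed



lemma GL:
  fixes N :: nat and nu lam C0 C1 :: real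
  assumes N: "N \<ge> 1"
  and T: "\<And>c0 c1. \<exists>T0 T1::int. odd (T1 - T0) \<and>
     - cis (beta lam (C0 + (if c0 then pi else 0))) = cis ((of_int T0 + nu) * pi / N) \<and>
     - cis (beta lam (C1 + (if c1 then pi else 0))) = cis ((of_int T1 + nu) * pi / N)"
  shows "paradox (B_state lam) (std_angles N 0) (std_angles N nu) {C0, C1}"
  unfolding paradox_def
proof (intro allI)
  fix g1 g2 g3 :: "real \<Rightarrow> bool"
  obtain T0 T1 :: int where od: "odd (T1 - T0)"
    and t0: "- cis (beta lam (C0 + (if g3 C0 then pi else 0))) = cis ((of_int T0 + nu) * pi / N)"
    and t1: "- cis (beta lam (C1 + (if g3 C1 then pi else 0))) = cis ((of_int T1 + nu) * pi / N)"
    using T by blast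
  define n where "n = int N"
  have n0: "n > 0" using N n_def by simp
  define Aof where "Aof x = (of_int (x mod n) + 0) * pi / N" for x
  define Bof where "Bof y = (of_int (y mod n) + nu) * pi / N" for y
  define f where "f x = (g1 (Aof x) = odd (x div n))" for x
  define h where "h y = (g2 (Bof y) = odd (y div n))" for y
  have pf: "\<forall>x. f (x + n) = (\<not> f x)" unfolding f_def Aof_def using n0 by simp
  have ph: "\<forall>y. h (y + n) = (\<not> h y)" unfolding h_def Bof_def using n0 by simp
  obtain x y where fx: "f x" and hy: "h y" and xy: "x + y = T0 \<or> x + y = T1"
    using CL[OF n0 pf ph od] by blast
  have cA: "cis (Aof x + (if g1 (Aof x) then pi else 0)) = cis ((of_int x + 0) * pi / N)"
    unfolding Aof_def by (rule chosen[OF n_def N]) (use fx f_def Aof_def in simp)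
  have cB: "cis (Bof y + (if g2 (Bof y) then pi else 0)) = cis ((of_int y + nu) * pi / N)"
    unfolding Bof_def by (rule chosen[OF n_def N]) (use hy h_def Bof_def in simp)
  have sum: "cis (Aof x + (if g1 (Aof x) then pi else 0) + (Bof y + (if g2 (Bof y) then pi else 0)))
      = cis ((of_int (x + y) + nu) * pi / N)"
  proof -
    have "cis (Aof x + (if g1 (Aof x) then pi else 0) + (Bof y + (if g2 (Bof y) then pi else 0)))
       = cis ((of_int x + 0) * pi / N) * cis ((of_int y + nu) * pi / N)"
      unfolding cA[symmetric] cB[symmetric] by (simp only: cis_mult)
    also have "\<dots> = cis ((of_int (x + y) + nu) * pi / N)"
      by (simp add: cis_mult add_divide_distrib[symmetric] algebra_simps)
    finally show ?thesis .
  qed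
  have Ain: "Aof x \<in> std_angles N 0" unfolding Aof_def by (rule in_std[OF n_def N])
  have Bin: "Bof y \<in> std_angles N nu" unfolding Bof_def by (rule in_std[OF n_def N])
  show "\<exists>A\<in>std_angles N 0. \<exists>B\<in>std_angles N nu. \<exists>C\<in>{C0, C1}.
            impossible_event (B_state lam) A B C (g1 A) (g2 B) (g3 C)"
  proof (cases "x + y = T0")
    case True
    have "impossible_event (B_state lam) (Aof x) (Bof y) C0 (g1 (Aof x)) (g2 (Bof y)) (g3 C0)"
      by (rule imp_suff) (simp only: sum True t0[symmetric])
    then show ?thesis using Ain Bin by blast
  next
    case False
    then have F: "x + y = T1" using xy by simp
    have "impossible_event (B_state lam) (Aof x) (Bof y) C1 (g1 (Aof x)) (g2 (Bof y)) (g3 C1)"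
      by (rule imp_suff) (simp only: sum F t1[symmetric])
    then show ?thesis using Ain Bin by blast
  qed
qed



lemma GL2:
  fixes N :: nat and nu lam C0 C1 :: real and Xa Xb :: "bool \<Rightarrow> real" and Ta Tb :: "bool \<Rightarrow> int"
  assumes N: "N \<ge> 1"
  and b0: "\<And>c. cis (beta lam (C0 + (if c then pi else 0))) = cis (Xa c * pi / N)"
  and b1: "\<And>c. cis (beta lam (C1 + (if c then pi else 0))) = cis (Xb c * pi / N)"
  and e0: "\<And>c. Xa c + N = of_int (Ta c) + nu"
  and e1: "\<And>c. Xb c + N = of_int (Tb c) + nu"
  and od: "\<And>c0 c1. odd (Tb c1 - Ta c0)"
  shows "paradox (B_state lam) (std_angles N 0) (std_angles N nu) {C0, C1}"
proof (rule GL[OF N])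
  fix c0 c1
  have tg: "- cis b = cis ((of_int T + nu) * pi / N)" if "cis b = cis (X * pi / N)" "X + N = of_int T + nu"
    for b X and T :: int
  proof -
    have "(of_int T + nu) * pi / N = X * pi / N + pi" using N that(2)[symmetric] by (simp add: field_simps)
    then show ?thesis using that(1) by (simp add: cis_mult[symmetric])
  qed
  show "\<exists>Ta Tb::int. odd (Tb - Ta) \<and>
     - cis (beta lam (C0 + (if c0 then pi else 0))) = cis ((of_int Ta + nu) * pi / N) \<and>
     - cis (beta lam (C1 + (if c1 then pi else 0))) = cis ((of_int Tb + nu) * pi / N)"
    using od[of c1 c0] tg[OF b0 e0] tg[OF b1 e1] by blast
qed

lemma sin_lt_cos_half:
  assumes "0 \<le> lam" "lam < pi/2"
  shows "sin (lam/2) < cos (lam/2)"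
proof -
  have cl: "cos lam > 0" using assms by (intro cos_gt_zero_pi) auto
  have "cos lam = cos (2 * (lam/2))" by simp
  also have "\<dots> = (cos (lam/2))^2 - (sin (lam/2))^2" by (rule cos_double)
  finally have e: "cos lam = (cos (lam/2))^2 - (sin (lam/2))^2" .
  have c0: "cos (lam/2) > 0" using assms by (intro cos_gt_zero_pi) auto
  have s0: "sin (lam/2) \<ge> 0" using assms by (intro sin_ge_zero) auto
  show ?thesis
  proof (rule ccontr)
    assume "\<not> ?thesis"
    then have "cos (lam/2) \<le> sin (lam/2)" by simp
    then have "(cos (lam/2))^2 \<le> (sin (lam/2))^2" using c0 by (intro power_mono) auto
    then show False using e cl by simp
  qed
qed

lemma beta_0:
  assumes "0 \<le> lam" "lam < pi/2"
  shows "beta lam 0 = 0" "beta lam pi = pi"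
proof -
  have c0: "cos (lam/2) > 0" using assms by (intro cos_gt_zero_pi) auto
  have s0: "sin (lam/2) \<ge> 0" using assms by (intro sin_ge_zero) auto
  have sc: "sin (lam/2) < cos (lam/2)" by (rule sin_lt_cos_half[OF assms])
  show "beta lam 0 = 0" unfolding beta_def Let_def using c0 s0 by simp
  show "beta lam pi = pi" unfolding beta_def Let_def using sc by simp
qed

lemma beta_shift: "cis (beta lam (C + pi)) = cis (beta lam C) * cis (delta lam C)"
  unfolding delta_def by (simp add: cis_mult)

lemma std2: "std_angles 2 0 = {0, pi/2}"
proof -
  have "std_angles 2 0 = {real k * pi / 2 | k. k < 2}" unfolding std_angles_def by simp
  also have "\<dots> = {0, pi/2}"
  proof (intro set_eqI iffI)
    fix x assume "x \<in> {real k * pi / 2 | k. k < 2}"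
    then obtain k :: nat where "k < 2" "x = real k * pi / 2" by blast
    then show "x \<in> {0, pi/2}" by (cases k) (auto simp: less_Suc_eq)
  next
    fix x assume "x \<in> {0, pi/2::real}"
    then have "x = real (0::nat) * pi / 2 \<or> x = real (1::nat) * pi / 2" by auto
    then show "x \<in> {real k * pi / 2 | k. k < 2}"
    proof
      assume "x = real 0 * pi / 2" then show ?thesis by (intro CollectI exI[of _ 0]) simp
    next
      assume "x = real 1 * pi / 2" then show ?thesis by (intro CollectI exI[of _ 1]) simp
    qed
  qed
  finally show ?thesis .
qed

lemma caseA: "paradox (B_state 0) {0, pi/2} {0, pi/2} {0, pi/2}"
proof -
  have p: "paradox (B_state 0) (std_angles 2 0) (std_angles 2 0) {0, pi/2}"
  proof (rule GL2[where Xa = "\<lambda>c. if c then 2 else 0" and Xb = "\<lambda>c. if c then 1 else -1"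
        and Ta = "\<lambda>c. if c then 4 else 2" and Tb = "\<lambda>c. if c then 3 else 1"])
    fix c :: bool
    show "cis (beta 0 (0 + (if c then pi else 0))) = cis ((if c then 2 else 0) * pi / real 2)"
      using beta_0[of 0] by (cases c) auto
    have c3: "cos (3 * pi / 2) = 0"
    proof -
      have e: "3 * pi / 2 = pi / 2 + pi" by simp
      have "cos (pi / 2 + pi) = 0" by (simp only: cos_add cos_pi_half cos_pi sin_pi)
      then show ?thesis unfolding e .
    qed
    show "cis (beta 0 (pi/2 + (if c then pi else 0))) = cis ((if c then 1 else -1) * pi / real 2)"
      by (cases c) (auto simp: beta_def Let_def c3)
  qed auto
  then show ?thesis unfolding std2 .
qed



lemma caseB:
  fixes N :: nat and s t :: int and lam C1 :: real
  assumes lam: "0 \<le> lam" "lam < pi/2" and N: "N > 2" "even N"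
    and st: "even s" "odd t"
    and d1: "cong2pi (delta lam C1) (pi / real N * of_int s)"
    and b1: "cong2pi (beta lam C1) (- (pi / real N * of_int t))"
  shows "paradox (B_state lam) (std_angles N 0) (std_angles N 0) {0, C1}"
proof (rule GL2[where Xa = "\<lambda>c. if c then real N else 0" and Ta = "\<lambda>c. if c then 2 * int N else int N"
      and Xb = "\<lambda>c. if c then of_int (s - t) else - of_int t" and Tb = "\<lambda>c. if c then int N + (s - t) else int N - t"])
  show "1 \<le> N" using N by simp
  fix c :: bool
  show "cis (beta lam (0 + (if c then pi else 0))) = cis ((if c then real N else 0) * pi / real N)"
    using beta_0[OF lam] N by (cases c) auto
  have cb: "cis (beta lam C1) = cis (- (pi / real N * of_int t))" by (rule cong2pi_cis[OF b1])
  have cd: "cis (delta lam C1) = cis (pi / real N * of_int s)" by (rule cong2pi_cis[OF d1])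
  show "cis (beta lam (C1 + (if c then pi else 0))) = cis ((if c then of_int (s - t) else - of_int t) * pi / real N)"
  proof (cases c)
    case True
    have "cis (beta lam (C1 + pi)) = cis (- (pi / real N * of_int t)) * cis (pi / real N * of_int s)"
      using beta_shift cb cd by simp
    also have "\<dots> = cis (of_int (s - t) * pi / real N)" by (simp add: cis_mult algebra_simps diff_divide_distrib add_divide_distrib)
    finally show ?thesis using True by simp
  next
    case False then show ?thesis using cb by (simp add: field_simps)
  qed
next
  fix c0 c1 :: bool
  show "odd ((if c1 then int N + (s - t) else int N - t) - (if c0 then 2 * int N else int N))"
    using N st by (cases c0; cases c1) auto
qed auto

lemma caseC:
  fixes N :: nat and s t' :: int and lam C0 C1 :: real
  assumes N: "N \<ge> 1" and st: "even s"
    and d0: "cong2pi (delta lam C0) (pi / real N * of_int s)"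
    and d1: "cong2pi (delta lam C1) (pi / real N * of_int s)"
    and b0: "cong2pi (beta lam C0) (- (pi / real N * (of_int t' + 1/2)))"
    and b1: "cong2pi (beta lam C1) (- (pi / real N * (of_int s - of_int t' - 1/2)))"
  shows "paradox (B_state lam) (std_angles N 0) (std_angles N (1/2)) {C0, C1}"
proof (rule GL2[where Xa = "\<lambda>c. if c then of_int s - (of_int t' + 1/2) else - (of_int t' + 1/2)"
      and Ta = "\<lambda>c. if c then int N + s - t' - 1 else int N - t' - 1"
      and Xb = "\<lambda>c. if c then of_int t' + 1/2 else - (of_int s - of_int t' - 1/2)"
      and Tb = "\<lambda>c. if c then int N + t' else int N - s + t'"])
  show "1 \<le> N" using N by simp
  fix c :: bool
  have cb: "cis (beta lam C0) = cis (- (pi / real N * (of_int t' + 1/2)))" by (rule cong2pi_cis[OF b0])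
  have cd: "cis (delta lam C0) = cis (pi / real N * of_int s)" by (rule cong2pi_cis[OF d0])
  show "cis (beta lam (C0 + (if c then pi else 0))) = cis ((if c then of_int s - (of_int t' + 1/2) else - (of_int t' + 1/2)) * pi / real N)"
  proof (cases c)
    case True
    have "cis (beta lam (C0 + pi)) = cis (- (pi / real N * (of_int t' + 1/2))) * cis (pi / real N * of_int s)"
      using beta_shift cb cd by simp
    also have "\<dots> = cis ((of_int s - (of_int t' + 1/2)) * pi / real N)" by (simp add: cis_mult algebra_simps diff_divide_distrib add_divide_distrib)
    finally show ?thesis using True by simp
  next
    case False then show ?thesis using cb by (simp add: field_simps)
  qed
  have cb': "cis (beta lam C1) = cis (- (pi / real N * (of_int s - of_int t' - 1/2)))" by (rule cong2pi_cis[OF b1])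
  have cd': "cis (delta lam C1) = cis (pi / real N * of_int s)" by (rule cong2pi_cis[OF d1])
  show "cis (beta lam (C1 + (if c then pi else 0))) = cis ((if c then of_int t' + 1/2 else - (of_int s - of_int t' - 1/2)) * pi / real N)"
  proof (cases c)
    case True
    have "cis (beta lam (C1 + pi)) = cis (- (pi / real N * (of_int s - of_int t' - 1/2))) * cis (pi / real N * of_int s)"
      using beta_shift cb' cd' by simp
    also have "\<dots> = cis ((of_int t' + 1/2) * pi / real N)" by (simp add: cis_mult algebra_simps diff_divide_distrib add_divide_distrib)
    finally show ?thesis using True by simp
  next
    case False then show ?thesis using cb' by (simp add: field_simps)
  qed
next
  fix c0 c1 :: bool
  show "odd ((if c1 then int N + t' else int N - s + t') - (if c0 then int N + s - t' - 1 else int N - t' - 1))"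
    using st by (cases c0; cases c1) auto
qed auto

lemma caseD:
  fixes N :: nat and s s' t' :: int and lam C0 C1 t :: real
  assumes N: "N \<ge> 1" and st: "even s" "even s'" "odd t'"
    and d0: "cong2pi (delta lam C0) (pi / real N * of_int s)"
    and d1: "cong2pi (delta lam C1) (pi / real N * of_int s')"
    and b10: "cong2pi (beta lam C1 - beta lam C0) (pi / real N * of_int t')"
    and b0: "cong2pi (beta lam C0) (- (pi / real N * t))"
  shows "paradox (B_state lam) (std_angles N 0) (std_angles N (of_int \<lceil>t\<rceil> - t)) {C0, C1}"
proof (rule GL2[where Xa = "\<lambda>c. if c then of_int s - t else - t"
      and Ta = "\<lambda>c. if c then int N - \<lceil>t\<rceil> + s else int N - \<lceil>t\<rceil>"
      and Xb = "\<lambda>c. if c then of_int t' - t + of_int s' else of_int t' - t"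
      and Tb = "\<lambda>c. if c then int N - \<lceil>t\<rceil> + t' + s' else int N - \<lceil>t\<rceil> + t'"])
  show "1 \<le> N" using N by simp
  fix c :: bool
  have cb: "cis (beta lam C0) = cis (- (pi / real N * t))" by (rule cong2pi_cis[OF b0])
  have cd: "cis (delta lam C0) = cis (pi / real N * of_int s)" by (rule cong2pi_cis[OF d0])
  show "cis (beta lam (C0 + (if c then pi else 0))) = cis ((if c then of_int s - t else - t) * pi / real N)"
  proof (cases c)
    case True
    have "cis (beta lam (C0 + pi)) = cis (- (pi / real N * t)) * cis (pi / real N * of_int s)"
      using beta_shift cb cd by simp
    also have "\<dots> = cis ((of_int s - t) * pi / real N)" by (simp add: cis_mult algebra_simps diff_divide_distrib add_divide_distrib)
    finally show ?thesis using True by simp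
  next
    case False then show ?thesis using cb by (simp add: field_simps)
  qed
  have c10: "cis (beta lam C1 - beta lam C0) = cis (pi / real N * of_int t')" by (rule cong2pi_cis[OF b10])
  have cb': "cis (beta lam C1) = cis ((of_int t' - t) * pi / real N)"
  proof -
    have "cis (beta lam C1) = cis (beta lam C1 - beta lam C0) * cis (beta lam C0)" by (simp add: cis_mult)
    also have "\<dots> = cis ((of_int t' - t) * pi / real N)" unfolding c10 cb by (simp add: cis_mult algebra_simps diff_divide_distrib add_divide_distrib)
    finally show ?thesis .
  qed
  have cd': "cis (delta lam C1) = cis (pi / real N * of_int s')" by (rule cong2pi_cis[OF d1])
  show "cis (beta lam (C1 + (if c then pi else 0))) = cis ((if c then of_int t' - t + of_int s' else of_int t' - t) * pi / real N)"
  proof (cases c)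
    case True
    have "cis (beta lam (C1 + pi)) = cis ((of_int t' - t) * pi / real N) * cis (pi / real N * of_int s')"
      using beta_shift cb' cd' by simp
    also have "\<dots> = cis ((of_int t' - t + of_int s') * pi / real N)" by (simp add: cis_mult algebra_simps diff_divide_distrib add_divide_distrib)
    finally show ?thesis using True by simp
  next
    case False then show ?thesis using cb' by (simp add: field_simps)
  qed
next
  fix c0 c1 :: bool
  show "odd ((if c1 then int N - \<lceil>t\<rceil> + t' + s' else int N - \<lceil>t\<rceil> + t') - (if c0 then int N - \<lceil>t\<rceil> + s else int N - \<lceil>t\<rceil>))"
    using st by (cases c0; cases c1) auto
qed auto



lemma part2:
  fixes N :: nat and s t :: int and lam C1 :: real
  assumes lam: "0 \<le> lam" "lam < pi/2" and C: "0 \<le> C1" "C1 < pi"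
    and st: "s = 2 * t" "1 \<le> t" "s < int N"
    and d1: "cong2pi (delta lam C1) (pi / real N * of_int s)"
    and b1: "cong2pi (beta lam C1) (- (pi / real N * of_int t))"
  shows "lam = pi/2 - pi / real N * of_int t \<and> C1 = pi/2"
proof -
  define th where "th = pi / real N * of_int t"
  have Npos: "real N > 0" using st by simp
  have th0: "0 < th" unfolding th_def using st Npos by simp
  have th1: "th < pi/2"
  proof -
    have "2 * of_int t < real N" using st by linarith
    then have "of_int t / real N < 1/2" using Npos by (simp add: field_simps)
    then have "pi * (of_int t / real N) < pi * (1/2)" by (intro mult_strict_left_mono) auto
    then show ?thesis unfolding th_def by simp
  qed
  define w where "w = cis (- th)"
  define w' where "w' = cis th"
  define u where "u = cis C1"
  define sr where "sr = sin (lam/2)"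
  define cr where "cr = cos (lam/2)"
  define s' where "s' = complex_of_real sr"
  define c' where "c' = complex_of_real cr"
  have ww: "w * w' = 1" unfolding w_def w'_def by (simp add: cis_mult)
  have uu: "u * cis (- C1) = 1" unfolding u_def by (simp add: cis_mult)
  have cb: "cis (beta lam C1) = w" unfolding w_def th_def by (rule cong2pi_cis[OF b1])
  have cbp: "cis (beta lam (C1 + pi)) = w'"
  proof -
    have "cis (beta lam (C1 + pi)) = cis (- th) * cis (pi / real N * of_int s)"
      using beta_shift cong2pi_cis[OF b1] cong2pi_cis[OF d1] unfolding th_def by simp
    also have "\<dots> = cis th" unfolding th_def st(1) by (simp add: cis_mult algebra_simps)
    finally show ?thesis unfolding w'_def .
  qed
  have E1: "u * (s' - c' * w) = w * s' - c'"
  proof -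
    have "w * (s' + c' * u) = u * (s' + c' * cis (- C1))"
      using L1[of lam C1] unfolding cb s'_def c'_def sr_def cr_def u_def .
    then show ?thesis using uu by (simp add: algebra_simps)
  qed
  have E2: "u * (s' - w' * c') = c' - w' * s'"
  proof -
    have "w' * (s' + c' * cis (C1 + pi)) = cis (C1 + pi) * (s' + c' * cis (- (C1 + pi)))"
      using L1[of lam "C1 + pi"] unfolding cbp s'_def c'_def sr_def cr_def .
    moreover have "cis (C1 + pi) = - u" unfolding u_def by (simp add: cis_mult[symmetric])
    moreover have "cis (- (C1 + pi)) = - cis (- C1)"
    proof -
      have "cis (- C1) * cis (- pi) = cis (- (C1 + pi))" by (simp add: cis_mult)
      moreover have "cis (- pi) = -1" by (simp add: complex_eq_iff)
      ultimately show ?thesis by simp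
    qed
    ultimately have "w' * (s' - c' * u) = - u * (s' - c' * cis (- C1))" by simp
    then show ?thesis using uu by (simp add: algebra_simps)
  qed
  have X: "(w * s' - c') * (s' - w' * c') = (c' - w' * s') * (s' - c' * w)"
  proof -
    have "(w * s' - c') * (s' - w' * c') = u * (s' - c' * w) * (s' - w' * c')" using E1 by simp
    also have "\<dots> = (u * (s' - w' * c')) * (s' - c' * w)" by (simp add: algebra_simps)
    also have "\<dots> = (c' - w' * s') * (s' - c' * w)" using E2 by simp
    finally show ?thesis .
  qed
  have Y: "(w + w') * (s' * s' + c' * c') = 4 * s' * c'"
  proof -
    have "(w * s' - c') * (s' - w' * c') = w * s' * s' + w' * c' * c' - 2 * s' * c'"
      using ww by (simp add: algebra_simps)
    moreover have "(c' - w' * s') * (s' - c' * w) = 2 * s' * c' - w * c' * c' - w' * s' * s'"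
      using ww by (simp add: algebra_simps)
    ultimately show ?thesis using X by (simp add: algebra_simps)
  qed
  have ww2: "w + w' = complex_of_real (2 * cos th)"
    unfolding w_def w'_def by (simp add: complex_eq_iff)
  have sc1: "s' * s' + c' * c' = 1" unfolding s'_def c'_def sr_def cr_def
  proof -
    have "complex_of_real (sin (lam/2)) * complex_of_real (sin (lam/2)) + complex_of_real (cos (lam/2)) * complex_of_real (cos (lam/2))
      = complex_of_real ((sin (lam/2))^2 + (cos (lam/2))^2)" by (simp add: power2_eq_square)
    also have "\<dots> = 1" by simp
    finally show "complex_of_real (sin (lam/2)) * complex_of_real (sin (lam/2)) + complex_of_real (cos (lam/2)) * complex_of_real (cos (lam/2)) = 1" .
  qed
  have "complex_of_real (2 * cos th) = complex_of_real (4 * sr * cr)"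
  proof -
    have "w + w' = 4 * s' * c'" using Y sc1 by simp
    then show ?thesis unfolding ww2 s'_def c'_def by simp
  qed
  then have "2 * cos th = 4 * sr * cr" using of_real_eq_iff by blast
  moreover have "sin lam = 2 * sr * cr" unfolding sr_def cr_def using sin_double[of "lam/2"] by simp
  ultimately have sl: "sin lam = cos th" by simp
  have lamv: "lam = pi/2 - th"
  proof -
    have "sin lam = sin (pi/2 - th)" using sl by (simp add: sin_cos_eq)
    then have "arcsin (sin lam) = arcsin (sin (pi/2 - th))" by simp
    moreover have "arcsin (sin lam) = lam" using lam by (intro arcsin_sin) auto
    moreover have "arcsin (sin (pi/2 - th)) = pi/2 - th" using th0 th1 by (intro arcsin_sin) auto
    ultimately show ?thesis by simp
  qed
  have cpos: "cr > 0" unfolding cr_def using lam by (intro cos_gt_zero_pi) auto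
  have sth: "sin th > 0" using th0 th1 by (intro sin_gt_zero) auto
  have "cos C1 = 0"
  proof -
    define a where "a = cos C1"
    define b where "b = sin C1"
    have uc: "u = Complex a b" unfolding u_def a_def b_def by (simp add: cis.ctr)
    have wc: "w = Complex (cos th) (- sin th)" unfolding w_def by (simp add: cis.ctr)
    have r1: "a * (sr - cr * cos th) - b * (cr * sin th) = sr * cos th - cr"
      and r2: "a * (cr * sin th) + b * (sr - cr * cos th) = - (sr * sin th)"
      using E1 unfolding uc wc s'_def c'_def by (simp_all add: complex_eq_iff algebra_simps)
    have "a * ((sr - cr * cos th)^2 + (cr * sin th)^2)
        = (sr * cos th - cr) * (sr - cr * cos th) - sr * sin th * (cr * sin th)"
      using arg_cong[OF r1, of "\<lambda>x. x * (sr - cr * cos th)"] arg_cong[OF r2, of "\<lambda>x. x * (cr * sin th)"]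
      by (simp add: algebra_simps power2_eq_square)
    also have "\<dots> = cos th * (sr^2 + cr^2) - sr * cr * ((sin th)^2 + (cos th)^2) - sr * cr"
      by (simp only: algebra_simps power2_eq_square)
    also have "\<dots> = cos th * (sr^2 + cr^2) - 2 * sr * cr" by simp
    also have "\<dots> = cos th - sin lam"
      unfolding sr_def cr_def by (simp add: sin_double[of "lam/2", simplified])
    also have "\<dots> = 0" using sl by simp
    finally have "a * ((sr - cr * cos th)^2 + (cr * sin th)^2) = 0" .
    moreover have "(sr - cr * cos th)^2 + (cr * sin th)^2 > 0"
      using cpos sth by (intro add_nonneg_pos) auto
    ultimately show ?thesis unfolding a_def using mult_eq_0_iff less_irrefl by metis
  qed
  then have "C1 = pi/2"
  proof -
    have "arccos (cos C1) = C1" using C by (intro arccos_cos) auto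
    then show ?thesis using \<open>cos C1 = 0\<close> by simp
  qed
  then show ?thesis using lamv unfolding th_def by simp
qed


theorem theorem20:
  fixes N :: nat and lam C0 C1 :: real and M1 M2 :: "real set"
  assumes hN: "N \<ge> 2"
    and hlam: "0 \<le> lam" "lam < pi/2"
    and hC: "C0 \<in> {0..<pi}" "C1 \<in> {0..<pi}"
    and hM: "measurement_scenario M1 M2 {C0, C1}"
  shows
   "(((N = 2 \<and> lam = 0 \<and> M1 = {0, pi/2} \<and> M2 = {0, pi/2} \<and> {C0, C1} = {0, pi/2})
     \<or> (N > 2 \<and> even N \<and>
        (\<exists>s t :: int. even s \<and> odd t \<and> 1 \<le> s \<and> s < int N \<and> 1 \<le> t \<and> t \<le> s - 1 \<and>
           C0 = 0 \<and> cong2pi (delta lam C1) (pi / real N * of_int s) \<and>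
           cong2pi (beta lam C1) (- (pi / real N * of_int t))) \<and>
        M1 = std_angles N 0 \<and> M2 = std_angles N 0)
     \<or> ((\<exists>s t' :: int. even s \<and> 1 \<le> s \<and> s < int N \<and> 0 \<le> t' \<and> t' \<le> s div 2 - 1 \<and>
           C1 = pi - C0 \<and>
           cong2pi (delta lam C0) (pi / real N * of_int s) \<and>
           cong2pi (delta lam C1) (pi / real N * of_int s) \<and>
           cong2pi (beta lam C0) (- (pi / real N * (of_int t' + 1/2))) \<and>
           cong2pi (beta lam C1) (- (pi / real N * (of_int s - of_int t' - 1/2)))) \<and>
        M1 = std_angles N 0 \<and> M2 = std_angles N (1/2))
     \<or> (\<exists>s s' t' :: int. even s \<and> even s' \<and> odd t' \<and> 1 \<le> s \<and> s < s' \<and> s' < int N \<and>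
           1 \<le> \<bar>t'\<bar> \<and> \<bar>t'\<bar> \<le> int N - 1 \<and>
           cong2pi (delta lam C0) (pi / real N * of_int s) \<and>
           cong2pi (delta lam C1) (pi / real N * of_int s') \<and>
           cong2pi (beta lam C1 - beta lam C0) (pi / real N * of_int t') \<and>
           (\<exists>t :: real. 0 < t \<and> t < of_int s \<and> cong2pi (beta lam C0) (- (pi / real N * t)) \<and>
              M1 = std_angles N 0 \<and> M2 = std_angles N (of_int \<lceil>t\<rceil> - t))))
    \<longrightarrow> paradox (B_state lam) M1 M2 {C0, C1})
   \<and> (\<forall>s t :: int. N > 2 \<longrightarrow> even N \<longrightarrow> even s \<longrightarrow> odd t \<longrightarrow>
     1 \<le> s \<longrightarrow> s < int N \<longrightarrow> 1 \<le> t \<longrightarrow> t \<le> s - 1 \<longrightarrow>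
     C0 = 0 \<longrightarrow> cong2pi (delta lam C1) (pi / real N * of_int s) \<longrightarrow>
     cong2pi (beta lam C1) (- (pi / real N * of_int t)) \<longrightarrow>
     M1 = std_angles N 0 \<longrightarrow> M2 = std_angles N 0 \<longrightarrow> t = s div 2 \<longrightarrow>
     lam = pi/2 - pi / real N * of_int t \<and> C1 = pi/2)"
  proof (rule conjI, rule impI)
  assume H: "(N = 2 \<and> lam = 0 \<and> M1 = {0, pi/2} \<and> M2 = {0, pi/2} \<and> {C0, C1} = {0, pi/2})
     \<or> (N > 2 \<and> even N \<and>
        (\<exists>s t :: int. even s \<and> odd t \<and> 1 \<le> s \<and> s < int N \<and> 1 \<le> t \<and> t \<le> s - 1 \<and>
           C0 = 0 \<and> cong2pi (delta lam C1) (pi / real N * of_int s) \<and>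
           cong2pi (beta lam C1) (- (pi / real N * of_int t))) \<and>
        M1 = std_angles N 0 \<and> M2 = std_angles N 0)
     \<or> ((\<exists>s t' :: int. even s \<and> 1 \<le> s \<and> s < int N \<and> 0 \<le> t' \<and> t' \<le> s div 2 - 1 \<and>
           C1 = pi - C0 \<and>
           cong2pi (delta lam C0) (pi / real N * of_int s) \<and>
           cong2pi (delta lam C1) (pi / real N * of_int s) \<and>
           cong2pi (beta lam C0) (- (pi / real N * (of_int t' + 1/2))) \<and>
           cong2pi (beta lam C1) (- (pi / real N * (of_int s - of_int t' - 1/2)))) \<and>
        M1 = std_angles N 0 \<and> M2 = std_angles N (1/2))
     \<or> (\<exists>s s' t' :: int. even s \<and> even s' \<and> odd t' \<and> 1 \<le> s \<and> s < s' \<and> s' < int N \<and>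
           1 \<le> \<bar>t'\<bar> \<and> \<bar>t'\<bar> \<le> int N - 1 \<and>
           cong2pi (delta lam C0) (pi / real N * of_int s) \<and>
           cong2pi (delta lam C1) (pi / real N * of_int s') \<and>
           cong2pi (beta lam C1 - beta lam C0) (pi / real N * of_int t') \<and>
           (\<exists>t :: real. 0 < t \<and> t < of_int s \<and> cong2pi (beta lam C0) (- (pi / real N * t)) \<and>
              M1 = std_angles N 0 \<and> M2 = std_angles N (of_int \<lceil>t\<rceil> - t)))"
  have N1: "N \<ge> 1" using hN by simp
  show "paradox (B_state lam) M1 M2 {C0, C1}"
  proof (cases "N = 2 \<and> lam = 0 \<and> M1 = {0, pi/2} \<and> M2 = {0, pi/2} \<and> {C0, C1} = {0, pi/2}")
    case True
    then show ?thesis using caseA by simp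
  next
    case F1: False
    show ?thesis
    proof (cases "N > 2 \<and> even N \<and>
        (\<exists>s t :: int. even s \<and> odd t \<and> 1 \<le> s \<and> s < int N \<and> 1 \<le> t \<and> t \<le> s - 1 \<and>
           C0 = 0 \<and> cong2pi (delta lam C1) (pi / real N * of_int s) \<and>
           cong2pi (beta lam C1) (- (pi / real N * of_int t))) \<and>
        M1 = std_angles N 0 \<and> M2 = std_angles N 0")
      case True
      then obtain s t :: int where "even s" "odd t" "C0 = 0"
        "cong2pi (delta lam C1) (pi / real N * of_int s)"
        "cong2pi (beta lam C1) (- (pi / real N * of_int t))" by blast
      then show ?thesis using caseB[OF hlam _ _ \<open>even s\<close> \<open>odd t\<close>] True by auto
    next
      case F2: False
      show ?thesis
      proof (cases "(\<exists>s t' :: int. even s \<and> 1 \<le> s \<and> s < int N \<and> 0 \<le> t' \<and> t' \<le> s div 2 - 1 \<and>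
           C1 = pi - C0 \<and>
           cong2pi (delta lam C0) (pi / real N * of_int s) \<and>
           cong2pi (delta lam C1) (pi / real N * of_int s) \<and>
           cong2pi (beta lam C0) (- (pi / real N * (of_int t' + 1/2))) \<and>
           cong2pi (beta lam C1) (- (pi / real N * (of_int s - of_int t' - 1/2)))) \<and>
        M1 = std_angles N 0 \<and> M2 = std_angles N (1/2)")
        case True
        then obtain s t' :: int where "even s"
           "cong2pi (delta lam C0) (pi / real N * of_int s)"
           "cong2pi (delta lam C1) (pi / real N * of_int s)"
           "cong2pi (beta lam C0) (- (pi / real N * (of_int t' + 1/2)))"
           "cong2pi (beta lam C1) (- (pi / real N * (of_int s - of_int t' - 1/2)))" by blast
        then show ?thesis using caseC[OF N1] True by auto
      next
        case False
        then obtain s s' t' :: int and t :: real where "even s" "even s'" "odd t'"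
           "cong2pi (delta lam C0) (pi / real N * of_int s)"
           "cong2pi (delta lam C1) (pi / real N * of_int s')"
           "cong2pi (beta lam C1 - beta lam C0) (pi / real N * of_int t')"
           "cong2pi (beta lam C0) (- (pi / real N * t))"
           "M1 = std_angles N 0" "M2 = std_angles N (of_int \<lceil>t\<rceil> - t)"
          using H F1 F2 by blast
        then show ?thesis using caseD[OF N1] by auto
      qed
    qed
  qed
next
  show "\<forall>s t :: int. N > 2 \<longrightarrow> even N \<longrightarrow> even s \<longrightarrow> odd t \<longrightarrow>
     1 \<le> s \<longrightarrow> s < int N \<longrightarrow> 1 \<le> t \<longrightarrow> t \<le> s - 1 \<longrightarrow>
     C0 = 0 \<longrightarrow> cong2pi (delta lam C1) (pi / real N * of_int s) \<longrightarrow>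
     cong2pi (beta lam C1) (- (pi / real N * of_int t)) \<longrightarrow>
     M1 = std_angles N 0 \<longrightarrow> M2 = std_angles N 0 \<longrightarrow> t = s div 2 \<longrightarrow>
     lam = pi/2 - pi / real N * of_int t \<and> C1 = pi/2"
  proof (intro allI impI)
  fix s t :: int
  assume a: "N > 2" "even N" "even s" "odd t" "1 \<le> s" "s < int N" "1 \<le> t" "t \<le> s - 1" "C0 = 0"
    "cong2pi (delta lam C1) (pi / real N * of_int s)"
    "cong2pi (beta lam C1) (- (pi / real N * of_int t))"
    "M1 = std_angles N 0" "M2 = std_angles N 0" "t = s div 2"
  have s2: "s = 2 * t" using a by simp
  show "lam = pi/2 - pi / real N * of_int t \<and> C1 = pi/2"
    using part2[OF hlam _ _ s2 a(7) a(6) a(10) a(11)] hC by auto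
  qed
qed

end
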